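(* Let $X$ be a topological space, $D$ a countable set, and $\mathcal{I}\subseteq P(D)$ an ideal. Suppose that for every family $\{f_d\}_{d\in D}$ of pairwise distinct continuous real-valued functions on $X$ which $\mathcal{I}$-converges to $0$, there is $A\in\mathcal{I}^*$ such that $\{f_d\}_{d\in A}$ converges pointwise to $0$. Then $X$ has the $\mathcal{I}$-convergence property (i.e., the same conclusion holds for all families $\{f_d\}_{d\in D}$ of continuous real-valued functions, not necessarily distinct, which $\mathcal{I}$-converge to $0$).
   Context: An ideal $\mathcal{I}\subseteq P(D)$ contains all singletons and is closed under subsets and finite unions; $\mathcal{I}^*=\{D\setminus A:A\in\mathcal{I}\}$ is its dual filter. A family of reals $\{r_d\}_{d\in D}$ $\mathcal{I}$-converges to $0$ if for each $\epsilon>0$, $\{d\in D:|r_d|<\epsilon\}\in\mathcal{I}^*$. A family $\{f_d\}_{d\in D}$ of real-valued functions on $X$ $\mathcal{I}$-converges to $0$ if $\{f_d(x)\}_{d\in D}$ $\mathcal{I}$-converges to $0$ for each $x\in X$. For infinite $A\subseteq D$, $\{f_d\}_{d\in A}$ converges pointwise to $0$ means that for each $x$ and $\epsilon>0$, $|f_d(x)|\ge\epsilon$ for only finitely many $d\in A$. $X$ has the $\mathcal{I}$-convergence property if for every family $\{f_d\}_{d\in D}$ of continuous real-valued functions on $X$ which $\mathcal{I}$-converges to $0$ there is $A\in\mathcal{I}^*$ such that $\{f_d\}_{d\in A}$ converges pointwise to $0$. *)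

theory Defs
  imports "HOL-Analysis.Analysis"
begin

definition is_ideal :: "'d set \<Rightarrow> 'd set set \<Rightarrow> bool" where
  "is_ideal D I \<longleftrightarrow>
     I \<subseteq> Pow D \<and>
     {} \<in> I \<and>
     (\<forall>d\<in>D. {d} \<in> I) \<and>
     (\<forall>A\<in>I. \<forall>B. B \<subseteq> A \<longrightarrow> B \<in> I) \<and>
     (\<forall>A\<in>I. \<forall>B\<in>I. A \<union> B \<in> I)"

definition dual_filter :: "'d set \<Rightarrow> 'd set set \<Rightarrow> 'd set set" where
  "dual_filter D I = (\<lambda>A. D - A) ` I"

definition I_conv_zero :: "'d set \<Rightarrow> 'd set set \<Rightarrow> ('d \<Rightarrow> real) \<Rightarrow> bool" where
  "I_conv_zero D I r \<longleftrightarrow> (\<forall>\<epsilon>>0. {d\<in>D. \<bar>r d\<bar> < \<epsilon>} \<in> dual_filter D I)"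

definition I_conv_zero_fun ::
    "'a topology \<Rightarrow> 'd set \<Rightarrow> 'd set set \<Rightarrow> ('d \<Rightarrow> 'a \<Rightarrow> real) \<Rightarrow> bool" where
  "I_conv_zero_fun X D I f \<longleftrightarrow> (\<forall>x\<in>topspace X. I_conv_zero D I (\<lambda>d. f d x))"

definition pointwise_conv_zero_on ::
    "'a topology \<Rightarrow> 'd set \<Rightarrow> ('d \<Rightarrow> 'a \<Rightarrow> real) \<Rightarrow> bool" where
  "pointwise_conv_zero_on X A f \<longleftrightarrow>
     (\<forall>x\<in>topspace X. \<forall>\<epsilon>>0. finite {d\<in>A. \<bar>f d x\<bar> \<ge> \<epsilon>})"

definition I_convergence_property :: "'a topology \<Rightarrow> 'd set \<Rightarrow> 'd set set \<Rightarrow> bool" where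
  "I_convergence_property X D I \<longleftrightarrow>
     (\<forall>f :: 'd \<Rightarrow> 'a \<Rightarrow> real.
        (\<forall>d\<in>D. continuous_map X euclideanreal (f d)) \<longrightarrow> I_conv_zero_fun X D I f \<longrightarrow>
        (\<exists>A\<in>dual_filter D I. pointwise_conv_zero_on X A f))"

end

theory Submission
  imports Defs
begin

lemma dual_filter_iff:
  "B \<in> dual_filter D I \<longleftrightarrow> (\<exists>C\<in>I. B = D - C)"
  unfolding dual_filter_def by auto

lemma ideal_finite:
  assumes "is_ideal D I" "finite S" "S \<subseteq> D" shows "S \<in> I"
  using assms(2,3)
proof (induction S rule: finite_induct)
  case empty then show ?case using assms(1) unfolding is_ideal_def by auto
next
  case (insert x F)
  then have "{x} \<in> I" "F \<in> I" using assms(1) unfolding is_ideal_def by auto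
  then show ?case using assms(1) unfolding is_ideal_def
    by (metis insert_is_Un)
qed

lemma dual_mem:
  assumes "is_ideal D I" shows "B \<in> dual_filter D I \<longleftrightarrow> B \<subseteq> D \<and> D - B \<in> I"
proof
  assume "B \<in> dual_filter D I"
  then obtain C where "C \<in> I" "B = D - C" by (auto simp: dual_filter_iff)
  moreover have "C \<subseteq> D" using assms \<open>C \<in> I\<close> unfolding is_ideal_def by auto
  ultimately show "B \<subseteq> D \<and> D - B \<in> I" by (simp add: Diff_Diff_Int inf.absorb2)
next
  assume "B \<subseteq> D \<and> D - B \<in> I"
  then show "B \<in> dual_filter D I" unfolding dual_filter_iff by (auto intro!: bexI[of _ "D - B"])
qed

lemma dual_mono_int:
  assumes "is_ideal D I" "B1 \<in> dual_filter D I" "B2 \<in> dual_filter D I"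
    "B1 \<inter> B2 \<subseteq> B" "B \<subseteq> D"
  shows "B \<in> dual_filter D I"
proof -
  have "D - B1 \<in> I" "D - B2 \<in> I" using assms dual_mem by blast+
  then have u: "(D - B1) \<union> (D - B2) \<in> I" using assms(1) unfolding is_ideal_def by auto
  have "D - B \<subseteq> (D - B1) \<union> (D - B2)" using assms(4) by auto
  then have "D - B \<in> I" using u assms(1) unfolding is_ideal_def by auto
  then show ?thesis using assms(1,5) dual_mem by blast
qed

theorem mainTheorem13:
  fixes X :: "'a topology" and D :: "'d set" and I :: "'d set set"
  assumes "countable D"
    and "is_ideal D I"
    and "\<And>f :: 'd \<Rightarrow> 'a \<Rightarrow> real.
           (\<forall>d\<in>D. continuous_map X euclideanreal (f d)) \<Longrightarrow>
           inj_on (\<lambda>d. restrict (f d) (topspace X)) D \<Longrightarrow>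
           I_conv_zero_fun X D I f \<Longrightarrow>
           \<exists>A\<in>dual_filter D I. pointwise_conv_zero_on X A f"
  shows "I_convergence_property X D I"
  unfolding I_convergence_property_def
proof (intro allI impI)
  fix f :: "'d \<Rightarrow> 'a \<Rightarrow> real"
  assume cont: "\<forall>d\<in>D. continuous_map X euclideanreal (f d)" and conv: "I_conv_zero_fun X D I f"
  have DD: "D \<in> dual_filter D I"
    using dual_mem[OF assms(2)] assms(2) unfolding is_ideal_def by auto
  show "\<exists>A\<in>dual_filter D I. pointwise_conv_zero_on X A f"
  proof (cases "topspace X = {}")
    case True
    then show ?thesis using DD unfolding pointwise_conv_zero_on_def by auto
  next
    case False
    then obtain x0 where x0: "x0 \<in> topspace X" by blast
    define e where "e = to_nat_on D"
    have inje: "inj_on e D" unfolding e_def using assms(1) by auto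
    define a where "a d = 1 / (real (e d) + 1)" for d
    have apos: "a d > 0" for d unfolding a_def by auto
    have fin: "finite {d\<in>D. t * a d \<ge> \<epsilon>}" if "\<epsilon> > 0" "t > 0" for t \<epsilon> :: real
    proof -
      define N where "N = nat (ceiling (t / \<epsilon>))"
      have "e ` {d\<in>D. t * a d \<ge> \<epsilon>} \<subseteq> {..N}"
      proof
        fix n assume "n \<in> e ` {d\<in>D. t * a d \<ge> \<epsilon>}"
        then obtain d where d: "n = e d" "t / (real (e d) + 1) \<ge> \<epsilon>" unfolding a_def by auto
        then have "\<epsilon> * (real (e d) + 1) \<le> t" by (simp add: field_simps)
        then have "real (e d) + 1 \<le> t / \<epsilon>" using that by (simp add: field_simps)
        then have "real (e d) \<le> t / \<epsilon>" by linarith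
        then have "e d \<le> N" unfolding N_def by linarith
        then show "n \<in> {..N}" using d by auto
      qed
      then have "finite (e ` {d\<in>D. t * a d \<ge> \<epsilon>})" using finite_subset by blast
      moreover have "inj_on e {d\<in>D. t * a d \<ge> \<epsilon>}" using inje by (rule inj_on_subset) auto
      ultimately show ?thesis using finite_imageD by blast
    qed
    define bad where "bad = (\<lambda>(d, d'). (f d' x0 - f d x0) / (a d - a d')) ` (D \<times> D)"
    have "countable bad" unfolding bad_def using assms(1) by auto
    moreover have "uncountable {0<..<1::real}" by (simp add: uncountable_open_interval)
    ultimately obtain t where t: "t \<in> {0<..<1::real}" "t \<notin> bad"
      by (metis countable_subset subsetI)
    define g where "g d x = f d x + t * a d" for d x
    have gcont: "\<forall>d\<in>D. continuous_map X euclideanreal (g d)"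
      unfolding g_def using cont by (auto intro: continuous_map_add)
    have ginj: "inj_on (\<lambda>d. restrict (g d) (topspace X)) D"
    proof (rule inj_onI)
      fix d d' assume dd: "d \<in> D" "d' \<in> D" "restrict (g d) (topspace X) = restrict (g d') (topspace X)"
      have "g d x0 = g d' x0" using dd(3) x0 by (metis restrict_apply')
      then have eq: "f d x0 + t * a d = f d' x0 + t * a d'" unfolding g_def .
      show "d = d'"
      proof (rule ccontr)
        assume "d \<noteq> d'"
        then have "e d \<noteq> e d'" using inje dd by (auto dest: inj_onD)
        then have "a d \<noteq> a d'" unfolding a_def by auto
        then have "t = (f d' x0 - f d x0) / (a d - a d')" using eq by (simp add: field_simps)
        then have "t \<in> bad" unfolding bad_def using dd by force
        then show False using t by auto
      qed
    qed
    have gconv: "I_conv_zero_fun X D I g"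
      unfolding I_conv_zero_fun_def I_conv_zero_def
    proof (intro ballI allI impI)
      fix x assume x: "x \<in> topspace X"
      fix \<epsilon> :: real assume ep: "\<epsilon> > 0"
      have B1: "{d\<in>D. \<bar>f d x\<bar> < \<epsilon>/2} \<in> dual_filter D I"
      proof -
        have "\<epsilon>/2 > 0" using ep by simp
        then show ?thesis using conv x unfolding I_conv_zero_fun_def I_conv_zero_def by blast
      qed
      have "{d\<in>D. t * a d \<ge> \<epsilon>/2} \<in> I"
        using ideal_finite[OF assms(2) fin[of "\<epsilon>/2" t]] ep t by auto
      then have B2: "D - {d\<in>D. t * a d \<ge> \<epsilon>/2} \<in> dual_filter D I"
        unfolding dual_filter_iff by auto
      show "{d\<in>D. \<bar>g d x\<bar> < \<epsilon>} \<in> dual_filter D I"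
      proof (rule dual_mono_int[OF assms(2) B1 B2])
        show "{d\<in>D. \<bar>f d x\<bar> < \<epsilon>/2} \<inter> (D - {d\<in>D. t * a d \<ge> \<epsilon>/2}) \<subseteq> {d\<in>D. \<bar>g d x\<bar> < \<epsilon>}"
        proof
          fix d assume "d \<in> {d\<in>D. \<bar>f d x\<bar> < \<epsilon>/2} \<inter> (D - {d\<in>D. t * a d \<ge> \<epsilon>/2})"
          moreover have "t * a d > 0" using apos t by auto
          ultimately show "d \<in> {d\<in>D. \<bar>g d x\<bar> < \<epsilon>}" unfolding g_def by auto
        qed
      qed auto
    qed
    obtain A where A: "A \<in> dual_filter D I" "pointwise_conv_zero_on X A g"
      using assms(3)[OF gcont ginj gconv] by blast
    have AD: "A \<subseteq> D" using A(1) dual_mem[OF assms(2)] by auto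
    have "pointwise_conv_zero_on X A f"
      unfolding pointwise_conv_zero_on_def
    proof (intro ballI allI impI)
      fix x assume x: "x \<in> topspace X"
      fix \<epsilon> :: real assume ep: "\<epsilon> > 0"
      have f1: "finite {d\<in>A. \<bar>g d x\<bar> \<ge> \<epsilon>/2}" using A(2) x ep unfolding pointwise_conv_zero_on_def
        by (metis half_gt_zero)
      have f2: "finite {d\<in>D. t * a d \<ge> \<epsilon>/2}" using fin[of "\<epsilon>/2" t] ep t by auto
      have "{d\<in>A. \<bar>f d x\<bar> \<ge> \<epsilon>} \<subseteq> {d\<in>A. \<bar>g d x\<bar> \<ge> \<epsilon>/2} \<union> {d\<in>D. t * a d \<ge> \<epsilon>/2}"
      proof
        fix d assume d: "d \<in> {d\<in>A. \<bar>f d x\<bar> \<ge> \<epsilon>}"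
        have "t * a d > 0" using apos t by auto
        then show "d \<in> {d\<in>A. \<bar>g d x\<bar> \<ge> \<epsilon>/2} \<union> {d\<in>D. t * a d \<ge> \<epsilon>/2}"
          using d AD unfolding g_def by (auto simp: abs_if split: if_splits)
      qed
      then show "finite {d\<in>A. \<bar>f d x\<bar> \<ge> \<epsilon>}" using f1 f2 finite_subset by blast
    qed
    then show ?thesis using A(1) by blast
  qed
qed

end
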